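(* Let $\mathcal{X}$ be a Banach space with $\mathcal{X} \simeq \big(\sum \mathcal{X}\big)_p$ for some $1 \le p \le \infty$ or $p = 0$. Let $\mathcal{D}$ be a decomposition of $\mathcal{X}$ and let $L$ be the left shift associated with $\mathcal{D}$. Then for any $T_1, T_2, T_3 \in \mathcal{L}(\mathcal{X})$, the operator on $\mathcal{X} \oplus \mathcal{X}$ given by the matrix $\begin{pmatrix} T_1 & L \\ T_2 & T_3 \end{pmatrix}$ is a commutator in $\mathcal{L}(\mathcal{X} \oplus \mathcal{X})$, i.e. equals $AB - BA$ for some $A, B \in \mathcal{L}(\mathcal{X}\oplus\mathcal{X})$.
   Context: $\big(\sum Y\big)_p$ denotes the $\ell_p$-sum of countably many copies of $Y$ (the $c_0$-sum if $p=0$). A decomposition of $\mathcal{X}$ is a sequence $\mathcal{D} = \{X_i\}_{i=0}^\infty$ of closed subspaces such that: there are uniformly bounded projections $P_i$ on $\mathcal{X}$ with $P_i\mathcal{X} = X_i$ and $P_iP_j = 0$ for $i \ne j$; there are isomorphisms $\psi_i : X_i \to \mathcal{X}$ with $\|\psi_i^{-1}\| = 1$ and $\sup_i \|\psi_i\| < \infty$; and $Sx = (\psi_i P_i x)_{i}$ defines a surjective isomorphism $S : \mathcal{X} \to \big(\sum \mathcal{X}\big)_p$. The left shift associated with $\mathcal{D}$ is $S^{-1} L_0 S$, where $L_0(y_0, y_1, y_2, \ldots) = (y_1, y_2, \ldots)$ is the left shift on $\big(\sum \mathcal{X}\big)_p$. *)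

theory Defs
  imports "HOL-Analysis.Analysis"
begin

text \<open>The index p of an l_p-sum is an extended real: p = 0 encodes the c_0-sum,
  p = \<infinity> the l_\<infinity>-sum, and 1 \<le> p < \<infinity> the usual l_p-sum.\<close>

definition valid_p :: "ereal \<Rightarrow> bool" where
  "valid_p p \<longleftrightarrow> p = 0 \<or> 1 \<le> p"

definition lp_seq :: "ereal \<Rightarrow> (nat \<Rightarrow> 'a::real_normed_vector) set" where
  "lp_seq p =
     (if p = 0 then {x. x \<longlonglongrightarrow> 0}
      else if p = \<infinity> then {x. bounded (range x)}
      else {x. summable (\<lambda>n. norm (x n) powr real_of_ereal p)})"

definition lp_norm :: "ereal \<Rightarrow> (nat \<Rightarrow> 'a::real_normed_vector) \<Rightarrow> real" where
  "lp_norm p x =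
     (if p = 0 \<or> p = \<infinity> then (SUP n. norm (x n))
      else (\<Sum>n. norm (x n) powr real_of_ereal p) powr (1 / real_of_ereal p))"

definition lp_iso :: "ereal \<Rightarrow> ('a::real_normed_vector \<Rightarrow> (nat \<Rightarrow> 'a)) \<Rightarrow> bool" where
  "lp_iso p S \<longleftrightarrow>
     (\<forall>x y. S (x + y) = (\<lambda>n. S x n + S y n)) \<and>
     (\<forall>c x. S (c *\<^sub>R x) = (\<lambda>n. c *\<^sub>R S x n)) \<and>
     range S = lp_seq p \<and>
     (\<exists>C. \<forall>x. lp_norm p (S x) \<le> C * norm x) \<and>
     (\<exists>c>0. \<forall>x. c * norm x \<le> lp_norm p (S x))"

definition isomorphic_to_lp_sum :: "ereal \<Rightarrow> 'a::real_normed_vector itself \<Rightarrow> bool" where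
  "isomorphic_to_lp_sum p _ \<longleftrightarrow> (\<exists>S::'a \<Rightarrow> nat \<Rightarrow> 'a. lp_iso p S)"

definition decomp_S :: "(nat \<Rightarrow> 'a::real_normed_vector \<Rightarrow> 'a) \<Rightarrow> (nat \<Rightarrow> 'a \<Rightarrow> 'a) \<Rightarrow> 'a \<Rightarrow> nat \<Rightarrow> 'a" where
  "decomp_S \<psi> P x = (\<lambda>i. \<psi> i (P i x))"

definition decomposition ::
  "ereal \<Rightarrow> (nat \<Rightarrow> 'a::banach set) \<Rightarrow> (nat \<Rightarrow> 'a \<Rightarrow> 'a) \<Rightarrow> (nat \<Rightarrow> 'a \<Rightarrow> 'a) \<Rightarrow> bool" where
  "decomposition p X P \<psi> \<longleftrightarrow>
     (\<forall>i. subspace (X i) \<and> closed (X i)) \<and>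
     (\<forall>i. bounded_linear (P i) \<and> (\<forall>x. P i (P i x) = P i x) \<and> range (P i) = X i) \<and>
     (\<exists>M. \<forall>i x. norm (P i x) \<le> M * norm x) \<and>
     (\<forall>i j x. i \<noteq> j \<longrightarrow> P i (P j x) = 0) \<and>
     (\<forall>i. bij_betw (\<psi> i) (X i) UNIV \<and>
          (\<forall>x\<in>X i. \<forall>y\<in>X i. \<psi> i (x + y) = \<psi> i x + \<psi> i y) \<and>
          (\<forall>c. \<forall>x\<in>X i. \<psi> i (c *\<^sub>R x) = c *\<^sub>R \<psi> i x) \<and>
          bounded_linear (inv_into (X i) (\<psi> i)) \<and>
          onorm (inv_into (X i) (\<psi> i)) = 1) \<and>
     (\<exists>K. \<forall>i. \<forall>x\<in>X i. norm (\<psi> i x) \<le> K * norm x) \<and>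
     lp_iso p (decomp_S \<psi> P)"

definition left_shift :: "(nat \<Rightarrow> 'a::real_normed_vector \<Rightarrow> 'a) \<Rightarrow> (nat \<Rightarrow> 'a \<Rightarrow> 'a) \<Rightarrow> 'a \<Rightarrow> 'a" where
  "left_shift \<psi> P x = inv (decomp_S \<psi> P) (\<lambda>i. decomp_S \<psi> P x (Suc i))"

definition op_matrix :: "('a::real_normed_vector \<Rightarrow> 'a) \<Rightarrow> ('a \<Rightarrow> 'a) \<Rightarrow> ('a \<Rightarrow> 'a) \<Rightarrow> ('a \<Rightarrow> 'a)
    \<Rightarrow> 'a \<times> 'a \<Rightarrow> 'a \<times> 'a" where
  "op_matrix A11 A12 A21 A22 z = (A11 (fst z) + A12 (snd z), A21 (fst z) + A22 (snd z))"

definition is_commutator :: "('b::real_normed_vector \<Rightarrow> 'b) \<Rightarrow> bool" where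
  "is_commutator T \<longleftrightarrow>
     (\<exists>A B. bounded_linear A \<and> bounded_linear B \<and> (\<forall>z. T z = A (B z) - B (A z)))"

end

theory Submission
  imports Defs "HOL-Analysis.Analysis"
begin


lemma sylvester:
  fixes D1 D2 Y :: "'a::banach \<Rightarrow> 'a"
  assumes b1: "bounded_linear D1" and b2: "bounded_linear D2" and bY: "bounded_linear Y"
    and s: "s > norm (Blinfun D1) + norm (Blinfun D2)"
  shows "\<exists>F. bounded_linear F \<and> (\<forall>z. s *\<^sub>R F z = Y z - D1 (F z) + F (D2 z))"
proof -
  define d1 where "d1 = Blinfun D1"
  define d2 where "d2 = Blinfun D2"
  define y where "y = Blinfun Y"
  have s0: "s > 0" using s by (smt (verit) norm_ge_zero)
  define c where "c = (norm d1 + norm d2) / s"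
  have c0: "0 \<le> c" "c < 1" using s s0 unfolding c_def d1_def d2_def by (auto simp: field_simps)
  define f where "f = (\<lambda>x::'a \<Rightarrow>\<^sub>L 'a. (1/s) *\<^sub>R (y - (d1 o\<^sub>L x) + (x o\<^sub>L d2)))"
  have "\<forall>x x'. dist (f x) (f x') \<le> c * dist x x'"
  proof (intro allI)
    fix x x' :: "'a \<Rightarrow>\<^sub>L 'a"
    have "f x - f x' = (1/s) *\<^sub>R (((x - x') o\<^sub>L d2) - (d1 o\<^sub>L (x - x')))"
      unfolding f_def by (rule blinfun_eqI) (simp add: blinfun.bilinear_simps algebra_simps)
    hence "norm (f x - f x') = (1/s) * norm (((x - x') o\<^sub>L d2) - (d1 o\<^sub>L (x - x')))"
      using s0 by simp
    also have "\<dots> \<le> (1/s) * (norm (x - x') * norm d2 + norm d1 * norm (x - x'))"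
      using s0 norm_blinfun_compose[of "x - x'" d2] norm_blinfun_compose[of d1 "x - x'"]
      by (intro mult_left_mono) (auto intro: order_trans[OF norm_triangle_ineq4])
    also have "\<dots> = c * norm (x - x')" unfolding c_def by (simp add: field_simps)
    finally show "dist (f x) (f x') \<le> c * dist x x'" by (simp add: dist_norm)
  qed
  then obtain x where fx: "f x = x" using banach_fix_type[OF c0] by blast
  have "\<forall>z. s *\<^sub>R x z = Y z - D1 (x z) + x (D2 z)"
  proof
    fix z
    have "x z = f x z" using fx by simp
    also have "\<dots> = (1/s) *\<^sub>R (Y z - D1 (x z) + x (D2 z))"
      unfolding f_def d1_def d2_def y_def
      by (simp add: blinfun.bilinear_simps bounded_linear_Blinfun_apply b1 b2 bY)
    finally have h: "x z = (1/s) *\<^sub>R (Y z - D1 (x z) + x (D2 z))" .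
    have "s *\<^sub>R x z = s *\<^sub>R ((1/s) *\<^sub>R (Y z - D1 (x z) + x (D2 z)))"
      by (rule arg_cong[OF h])
    then show "s *\<^sub>R x z = Y z - D1 (x z) + x (D2 z)" using s0 by simp
  qed
  then show ?thesis using blinfun.bounded_linear_right by blast
qed



lemma bl_add: "bounded_linear f \<Longrightarrow> f (a + b) = f a + f b"
  by (simp add: linear_add bounded_linear.linear)
lemma bl_diff: "bounded_linear f \<Longrightarrow> f (a - b) = f a - f b"
  by (simp add: linear_diff bounded_linear.linear)
lemma bl_zero: "bounded_linear f \<Longrightarrow> f 0 = 0"
  by (simp add: linear_0 bounded_linear.linear)
lemma bl_minus: "bounded_linear f \<Longrightarrow> f (- a) = - f a"
  by (simp add: linear_neg bounded_linear.linear)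
lemma bl_scale: "bounded_linear f \<Longrightarrow> f (c *\<^sub>R a) = c *\<^sub>R f a"
  by (simp add: linear_scale bounded_linear.linear)

lemma alg_main:
  fixes J K L R Tinf T1 T2 T3 :: "'a::banach \<Rightarrow> 'a"
  assumes bJ: "bounded_linear J" and bK: "bounded_linear K" and bL: "bounded_linear L"
    and bR: "bounded_linear R" and bTi: "bounded_linear Tinf"
    and b1: "bounded_linear T1" and b2: "bounded_linear T2" and b3: "bounded_linear T3"
    and KJ: "\<And>x. K (J x) = x" and LR: "\<And>x. L (R x) = x"
    and KR: "\<And>x. K (R x) = 0" and LJ: "\<And>x. L (J x) = 0"
    and JKRL: "\<And>x. J (K x) + R (L x) = x"
    and TK: "\<And>x. K (Tinf x) = T1 (K x) + T3 (K x)"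
    and TL: "\<And>x. L (Tinf x) = Tinf (L x)"
  shows "is_commutator (op_matrix T1 L T2 T3)"
proof -
  note lin = bl_add[OF bJ] bl_add[OF bK] bl_add[OF bL]
    bl_add[OF bR] bl_add[OF bTi] bl_add[OF b1]
    bl_add[OF b2] bl_add[OF b3]
    bl_diff[OF bJ] bl_diff[OF bK] bl_diff[OF bL]
    bl_diff[OF bR] bl_diff[OF bTi] bl_diff[OF b1]
    bl_diff[OF b2] bl_diff[OF b3]
    bl_zero[OF bJ] bl_zero[OF bK] bl_zero[OF bL]
    bl_zero[OF bR] bl_zero[OF bTi] bl_zero[OF b1]
    bl_zero[OF b2] bl_zero[OF b3]
  define T where "T = (\<lambda>x. T1 x + T3 x)"
  have bT: "bounded_linear T" unfolding T_def by (intro bounded_linear_add b1 b3)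
  note linT = bl_add[OF bT] bl_diff[OF bT] bl_zero[OF bT]
  define L2 where "L2 = (\<lambda>x. J (L (K x)) + R (K (K x)))"
  define R2 where "R2 = (\<lambda>x. J (J (L x) + R (K x)))"
  define Ti2 where "Ti2 = (\<lambda>x. R (T (L x)) + J (Tinf (K x)))"
  define h1 where "h1 = (\<lambda>x. R2 (Ti2 x))"
  define \<Gamma> where "\<Gamma> = (\<lambda>x. R (T1 x) - R (R (T (L x))))"
  define h2 where "h2 = (\<lambda>x. R (T3 x + R (T (L x))))"
  have bL2: "bounded_linear L2" unfolding L2_def
    by (intro bounded_linear_add bounded_linear_compose[OF bJ] bounded_linear_compose[OF bR]
        bounded_linear_compose[OF bL] bounded_linear_compose[OF bK] bK)
  have bR2: "bounded_linear R2" unfolding R2_def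
    by (intro bounded_linear_compose[OF bJ] bounded_linear_add bounded_linear_compose[OF bJ]
        bounded_linear_compose[OF bR] bL bK)
  have bTi2: "bounded_linear Ti2" unfolding Ti2_def
    by (intro bounded_linear_add bounded_linear_compose[OF bJ] bounded_linear_compose[OF bR]
        bounded_linear_compose[OF bT] bounded_linear_compose[OF bTi] bL bK)
  have bh1: "bounded_linear h1" unfolding h1_def by (intro bounded_linear_compose[OF bR2 bTi2])
  have b\<Gamma>: "bounded_linear \<Gamma>" unfolding \<Gamma>_def
    by (intro bounded_linear_sub bounded_linear_compose[OF bR] bounded_linear_compose[OF bT] b1 bL)
  have bh2: "bounded_linear h2" unfolding h2_def
    by (intro bounded_linear_compose[OF bR] bounded_linear_add b3 bounded_linear_compose[OF bR]
        bounded_linear_compose[OF bT] bL)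
  note linG = bl_add[OF b\<Gamma>] bl_diff[OF b\<Gamma>] bl_zero[OF b\<Gamma>]
  note linh = bl_add[OF bh1] bl_diff[OF bh1] bl_zero[OF bh1]
     bl_add[OF bh2] bl_diff[OF bh2] bl_zero[OF bh2]
     bl_add[OF bL2] bl_diff[OF bL2] bl_zero[OF bL2]
  have L2R2: "L2 (R2 w) = w" for w
    unfolding L2_def R2_def by (simp add: lin KJ LR KR LJ JKRL)
  have Tiexp: "Tinf y = J (T (K y)) + R (Tinf (L y))" for y
    using JKRL[of "Tinf y"] by (simp add: TK TL T_def)
  have I1: "L2 (h1 x) - h1 (L2 x) = R (T (L x))" for x
  proof -
    have "h1 (L2 x) = J (J (T (K (K x))) + R (Tinf (L (K x))))"
      unfolding h1_def R2_def Ti2_def L2_def by (simp add: lin linT KJ LR KR LJ)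
    also have "\<dots> = J (Tinf (K x))" using Tiexp[of "K x"] by simp
    finally show ?thesis unfolding h1_def by (simp add: L2R2 Ti2_def)
  qed
  have I3: "L (\<Gamma> x) = T1 x - R (T (L x))" for x
    unfolding \<Gamma>_def by (simp add: lin LR)
  have I2: "L (h2 y) - h2 (L y) = T3 y + \<Gamma> (L y)" for y
    unfolding h2_def \<Gamma>_def T_def by (simp add: lin LR algebra_simps)
  define N21 where "N21 = (\<lambda>x. \<Gamma> (T1 x - L (\<Gamma> x)) + T2 x - T3 (\<Gamma> x))"
  have bN21: "bounded_linear N21" unfolding N21_def
    by (intro bounded_linear_add bounded_linear_sub bounded_linear_compose[OF b\<Gamma>] b1
        bounded_linear_compose[OF bL] b\<Gamma> b2 bounded_linear_compose[OF b3])
  have bmL: "bounded_linear (\<lambda>z. - L z)" by (intro bounded_linear_minus bL)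
  have bmL2: "bounded_linear (\<lambda>z. - L2 z)" by (intro bounded_linear_minus bL2)
  have bmN: "bounded_linear (\<lambda>z. - N21 z)" by (intro bounded_linear_minus bN21)
  define s :: real where "s = norm (Blinfun L2) + norm (Blinfun L) + norm (Blinfun (\<lambda>z. - L z))
      + norm (Blinfun (\<lambda>z. - L2 z)) + 1"
  have s1: "s > norm (Blinfun L2) + norm (Blinfun L)"
    unfolding s_def using norm_ge_zero[of "Blinfun (\<lambda>z. - L z)"] norm_ge_zero[of "Blinfun (\<lambda>z. - L2 z)"] by linarith
  have s2: "s > norm (Blinfun (\<lambda>z. - L z)) + norm (Blinfun (\<lambda>z. - L2 z))"
    unfolding s_def using norm_ge_zero[of "Blinfun L"] norm_ge_zero[of "Blinfun L2"] by linarith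
  obtain F where bF: "bounded_linear F" and Feq: "\<And>z. s *\<^sub>R F z = L z - L2 (F z) + F (L z)"
    using sylvester[OF bL2 bL bL s1] by blast
  obtain G where bG: "bounded_linear G"
    and Geq: "\<And>z. s *\<^sub>R G z = - N21 z - (- L (G z)) + G (- L2 z)"
    using sylvester[OF bmL bmL2 bmN s2] by blast
  have Geq': "L (G z) - G (L2 z) - s *\<^sub>R G z = N21 z" for z
    using Geq[of z] bl_minus[OF bG, of "L2 z"] by (simp add: algebra_simps)
  have Feq': "L2 (F z) + s *\<^sub>R F z - F (L z) = L z" for z
    using Feq[of z] by (simp add: algebra_simps)
  define AA where "AA = (\<lambda>p. (L2 (fst p) + s *\<^sub>R fst p, L (snd p)))"
  define BB where "BB = (\<lambda>p. (h1 (fst p) + F (snd p), G (fst p) + h2 (snd p)))"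
  define E where "E = (\<lambda>p. (fst p, \<Gamma> (fst p) + snd p))"
  define Ei where "Ei = (\<lambda>p::'a\<times>'a. (fst p, snd p - \<Gamma> (fst p)))"
  define A where "A = (\<lambda>z. Ei (AA (E z)))"
  define B where "B = (\<lambda>z. Ei (BB (E z)))"
  have EEi: "E (Ei w) = w" for w unfolding E_def Ei_def by (cases w) auto
  note linF = bl_add[OF bF] bl_diff[OF bF] bl_zero[OF bF] bl_scale[OF bF]
     bl_add[OF bG] bl_diff[OF bG] bl_zero[OF bG] bl_scale[OF bG]
     bl_scale[OF bL2] bl_scale[OF bh1] bl_scale[OF bL]
  have comm: "AA (BB w) - BB (AA w) = (R (T (L (fst w))) + L (snd w),
        N21 (fst w) + (L (h2 (snd w)) - h2 (L (snd w))))" for w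
  proof (cases w)
    case (Pair x y)
    have "fst (AA (BB w) - BB (AA w)) = (L2 (h1 x) - h1 (L2 x)) + (L2 (F y) + s *\<^sub>R F y - F (L y))"
      unfolding AA_def BB_def Pair by (simp add: linh linF algebra_simps)
    moreover have "snd (AA (BB w) - BB (AA w)) = (L (G x) - G (L2 x) - s *\<^sub>R G x) + (L (h2 y) - h2 (L y))"
      unfolding AA_def BB_def Pair by (simp add: linh linF lin algebra_simps)
    ultimately show ?thesis unfolding Pair using I1 Feq' Geq' by (simp add: prod_eq_iff)
  qed
  have main: "Ei (AA (BB (E z)) - BB (AA (E z))) = op_matrix T1 L T2 T3 z" for z
  proof (cases z)
    case (Pair x y)
    define v where "v = \<Gamma> x + y"
    have Ez: "E z = (x, v)" unfolding Pair E_def v_def by simp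
    have f1: "R (T (L x)) + L v = T1 x + L y" unfolding v_def by (simp add: lin I3)
    have "Ei (AA (BB (E z)) - BB (AA (E z))) =
        (T1 x + L y, N21 x + (T3 v + \<Gamma> (L v)) - \<Gamma> (T1 x + L y))"
      unfolding comm Ez Ei_def using f1 I2[of v] by simp
    also have "\<dots> = (T1 x + L y, T2 x + T3 y)"
      unfolding N21_def v_def by (simp add: lin linG I3 algebra_simps)
    finally show ?thesis unfolding Pair op_matrix_def by simp
  qed
  note bf = bounded_linear_fst bounded_linear_snd
  have bAA: "bounded_linear AA" unfolding AA_def
    by (intro bounded_linear_Pair bounded_linear_add bounded_linear_compose[OF bL2 bounded_linear_fst]
      bounded_linear_compose[OF bounded_linear_scaleR_right bounded_linear_fst]
      bounded_linear_compose[OF bL bounded_linear_snd])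
  have bBB: "bounded_linear BB" unfolding BB_def
    by (intro bounded_linear_Pair bounded_linear_add bounded_linear_compose[OF bh1 bounded_linear_fst]
      bounded_linear_compose[OF bF bounded_linear_snd] bounded_linear_compose[OF bG bounded_linear_fst]
      bounded_linear_compose[OF bh2 bounded_linear_snd])
  have bE: "bounded_linear E" unfolding E_def
    by (intro bounded_linear_Pair bounded_linear_add bounded_linear_fst bounded_linear_snd
      bounded_linear_compose[OF b\<Gamma> bounded_linear_fst])
  have bEi: "bounded_linear Ei" unfolding Ei_def
    by (intro bounded_linear_Pair bounded_linear_sub bounded_linear_fst bounded_linear_snd
      bounded_linear_compose[OF b\<Gamma> bounded_linear_fst])
  have bA: "bounded_linear A" unfolding A_def
    by (intro bounded_linear_compose[OF bEi] bounded_linear_compose[OF bAA] bE)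
  have bB: "bounded_linear B" unfolding B_def
    by (intro bounded_linear_compose[OF bEi] bounded_linear_compose[OF bBB] bE)
  have "op_matrix T1 L T2 T3 z = A (B z) - B (A z)" for z
    unfolding A_def B_def EEi main[symmetric] bl_diff[OF bEi] ..
  then show ?thesis unfolding is_commutator_def using bA bB by blast
qed



lemma valid_p_cases:
  assumes "valid_p p"
  obtains "p = 0" | "p = \<infinity>" | q where "p = ereal q" "q \<ge> 1"
  using assms unfolding valid_p_def
  by (cases p) auto

lemma bdd_norm_seq:
  fixes s :: "nat \<Rightarrow> 'a::real_normed_vector"
  assumes "bounded (range s)"
  shows "bdd_above (range (\<lambda>n. norm (s n)))"
  using assms unfolding bounded_iff bdd_above_def by auto

lemma lp_seq_bdd:
  fixes s :: "nat \<Rightarrow> 'a::real_normed_vector"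
  assumes "p = 0 \<or> p = \<infinity>" "s \<in> lp_seq p"
  shows "bdd_above (range (\<lambda>n. norm (s n)))"
proof -
  have "bounded (range s)"
    using assms unfolding lp_seq_def
    by (auto split: if_splits intro: convergent_imp_bounded)
  then show ?thesis by (rule bdd_norm_seq)
qed

lemma lp_fin:
  assumes "p = ereal q" "q \<ge> 1"
  shows "lp_seq p = {x. summable (\<lambda>n. norm (x n) powr q)}"
    "lp_norm p x = (\<Sum>n. norm (x n) powr q) powr (1 / q)"
  using assms unfolding lp_seq_def lp_norm_def by auto

lemma lp_dom:
  fixes s :: "nat \<Rightarrow> 'a::real_normed_vector" and t :: "nat \<Rightarrow> 'b::real_normed_vector"
  assumes vp: "valid_p p" and sp: "s \<in> lp_seq p" and B: "B \<ge> 0"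
    and dom: "\<And>n. norm (t n) \<le> B * norm (s n)"
  shows "t \<in> lp_seq p \<and> lp_norm p t \<le> B * lp_norm p s"
  using vp
proof (cases rule: valid_p_cases)
  case 1
  have bd: "bdd_above (range (\<lambda>n. norm (s n)))" by (rule lp_seq_bdd[OF _ sp]) (use 1 in simp)
  have "s \<longlonglongrightarrow> 0" using sp 1 unfolding lp_seq_def by simp
  hence n0: "(\<lambda>n. norm (s n)) \<longlonglongrightarrow> 0" by (rule tendsto_norm_zero)
  have "(\<lambda>n. B * norm (s n)) \<longlonglongrightarrow> B * 0" by (rule tendsto_mult[OF tendsto_const n0])
  hence g0: "(\<lambda>n. B * norm (s n)) \<longlonglongrightarrow> 0" by simp
  have "t \<longlonglongrightarrow> 0"
    by (rule Lim_null_comparison[OF always_eventually g0]) (rule allI, rule dom)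
  moreover have "(SUP n. norm (t n)) \<le> B * (SUP n. norm (s n))"
  proof (rule cSUP_least)
    fix n
    show "norm (t n) \<le> B * (SUP n. norm (s n))"
      using dom[of n] mult_left_mono[OF cSUP_upper[OF UNIV_I bd, of n] B] by linarith
  qed simp
  ultimately show ?thesis using 1 unfolding lp_seq_def lp_norm_def by simp
next
  case 2
  have bd: "bdd_above (range (\<lambda>n. norm (s n)))" by (rule lp_seq_bdd[OF _ sp]) (use 2 in simp)
  then obtain M where M: "\<And>n. norm (s n) \<le> M" by (auto simp: bdd_above_def)
  have "bounded (range t)" unfolding bounded_iff
  proof (intro exI[of _ "B * M"] ballI)
    fix x assume "x \<in> range t"
    then obtain n where "x = t n" by auto
    then show "norm x \<le> B * M" using dom[of n] mult_left_mono[OF M[of n] B] by simp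
  qed
  moreover have "(SUP n. norm (t n)) \<le> B * (SUP n. norm (s n))"
  proof (rule cSUP_least)
    fix n
    show "norm (t n) \<le> B * (SUP n. norm (s n))"
      using dom[of n] mult_left_mono[OF cSUP_upper[OF UNIV_I bd, of n] B] by linarith
  qed simp
  ultimately show ?thesis using 2 unfolding lp_seq_def lp_norm_def by simp
next
  case (3 q)
  have q0: "q > 0" using 3 by simp
  have sm: "summable (\<lambda>n. norm (s n) powr q)" using sp 3 unfolding lp_seq_def by simp
  have le: "norm (t n) powr q \<le> B powr q * norm (s n) powr q" for n
  proof -
    have "norm (t n) powr q \<le> (B * norm (s n)) powr q"
      by (rule powr_mono2) (use dom q0 in auto)
    also have "\<dots> = B powr q * norm (s n) powr q" using B by (simp add: powr_mult)
    finally show ?thesis .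
  qed
  have smt: "summable (\<lambda>n. norm (t n) powr q)"
    by (rule summable_comparison_test'[OF summable_mult[OF sm, of "B powr q"]]) (use le in auto)
  have "(\<Sum>n. norm (t n) powr q) \<le> (\<Sum>n. B powr q * norm (s n) powr q)"
    by (rule suminf_le) (use le smt summable_mult[OF sm] in auto)
  also have "\<dots> = B powr q * (\<Sum>n. norm (s n) powr q)" using sm by (rule suminf_mult)
  finally have sle: "(\<Sum>n. norm (t n) powr q) \<le> B powr q * (\<Sum>n. norm (s n) powr q)" .
  have "(\<Sum>n. norm (t n) powr q) powr (1/q) \<le> (B powr q * (\<Sum>n. norm (s n) powr q)) powr (1/q)"
    using q0 sle suminf_nonneg[OF smt] by (intro powr_mono2) auto
  also have "\<dots> = B * (\<Sum>n. norm (s n) powr q) powr (1/q)"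
    using B q0 by (simp add: powr_mult powr_powr suminf_nonneg sm)
  finally show ?thesis using smt 3 unfolding lp_seq_def lp_norm_def by simp
qed

lemma lp_shift:
  fixes s :: "nat \<Rightarrow> 'a::real_normed_vector"
  assumes vp: "valid_p p" and sp: "s \<in> lp_seq p"
  shows "(\<lambda>n. s (Suc n)) \<in> lp_seq p \<and> lp_norm p (\<lambda>n. s (Suc n)) \<le> lp_norm p s"
  using vp
proof (cases rule: valid_p_cases)
  case 1
  have bd: "bdd_above (range (\<lambda>n. norm (s n)))" by (rule lp_seq_bdd[OF _ sp]) (use 1 in simp)
  have "s \<longlonglongrightarrow> 0" using sp 1 unfolding lp_seq_def by simp
  hence "(\<lambda>n. s (Suc n)) \<longlonglongrightarrow> 0" by (rule LIMSEQ_Suc)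
  moreover have "(SUP n. norm (s (Suc n))) \<le> (SUP n. norm (s n))"
  proof (rule cSUP_least)
    fix n show "norm (s (Suc n)) \<le> (SUP n. norm (s n))" by (rule cSUP_upper[OF UNIV_I bd, of "Suc n"])
  qed simp
  ultimately show ?thesis using 1 unfolding lp_seq_def lp_norm_def by simp
next
  case 2
  have bd: "bdd_above (range (\<lambda>n. norm (s n)))" by (rule lp_seq_bdd[OF _ sp]) (use 2 in simp)
  have "bounded (range s)" using sp 2 unfolding lp_seq_def by simp
  moreover have "range (\<lambda>n. s (Suc n)) \<subseteq> range s" by blast
  ultimately have "bounded (range (\<lambda>n. s (Suc n)))" by (rule bounded_subset)
  moreover have "(SUP n. norm (s (Suc n))) \<le> (SUP n. norm (s n))"
  proof (rule cSUP_least)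
    fix n show "norm (s (Suc n)) \<le> (SUP n. norm (s n))" by (rule cSUP_upper[OF UNIV_I bd, of "Suc n"])
  qed simp
  ultimately show ?thesis using 2 unfolding lp_seq_def lp_norm_def by simp
next
  case (3 q)
  have q0: "q > 0" using 3 by simp
  have sm: "summable (\<lambda>n. norm (s n) powr q)" using sp 3 unfolding lp_seq_def by simp
  have sm2: "summable (\<lambda>n. norm (s (Suc n)) powr q)" using sm by (subst summable_Suc_iff)
  have e: "(\<Sum>n. norm (s (Suc n)) powr q) = (\<Sum>n. norm (s n) powr q) - norm (s 0) powr q"
    by (rule suminf_split_head[OF sm])
  have "norm (s 0) powr q \<ge> 0" by (rule powr_ge_zero)
  hence le: "(\<Sum>n. norm (s (Suc n)) powr q) \<le> (\<Sum>n. norm (s n) powr q)" using e by linarith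
  have "(\<Sum>n. norm (s (Suc n)) powr q) powr (1/q) \<le> (\<Sum>n. norm (s n) powr q) powr (1/q)"
    using q0 le suminf_nonneg[OF sm2] by (intro powr_mono2) auto
  then show ?thesis using sm2 3 unfolding lp_seq_def lp_norm_def by simp
qed

lemma lp_cons0:
  fixes s :: "nat \<Rightarrow> 'a::real_normed_vector"
  assumes vp: "valid_p p" and sp: "s \<in> lp_seq p"
  shows "(\<lambda>n. case n of 0 \<Rightarrow> 0 | Suc m \<Rightarrow> s m) \<in> lp_seq p \<and>
    lp_norm p (\<lambda>n. case n of 0 \<Rightarrow> 0 | Suc m \<Rightarrow> s m) \<le> lp_norm p s"
  using vp
proof (cases rule: valid_p_cases)
  case 1
  have bd: "bdd_above (range (\<lambda>n. norm (s n)))" by (rule lp_seq_bdd[OF _ sp]) (use 1 in simp)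
  have "s \<longlonglongrightarrow> 0" using sp 1 unfolding lp_seq_def by simp
  hence "(\<lambda>n. case Suc n of 0 \<Rightarrow> 0 | Suc m \<Rightarrow> s m) \<longlonglongrightarrow> 0" by simp
  hence "(\<lambda>n. case n of 0 \<Rightarrow> 0 | Suc m \<Rightarrow> s m) \<longlonglongrightarrow> 0" by (rule LIMSEQ_imp_Suc)
  moreover have "(SUP n. norm (case n of 0 \<Rightarrow> 0 | Suc m \<Rightarrow> s m)) \<le> (SUP n. norm (s n))"
  proof (rule cSUP_least)
    fix n show "norm (case n of 0 \<Rightarrow> 0 | Suc m \<Rightarrow> s m) \<le> (SUP n. norm (s n))"
    proof (cases n)
      case 0
      have "norm (s 0) \<le> (SUP n. norm (s n))" by (rule cSUP_upper[OF UNIV_I bd, of 0])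
      then have "0 \<le> (SUP n. norm (s n))" by (rule order_trans[OF norm_ge_zero])
      then show ?thesis using 0 by simp
    next
      case (Suc m)
      have "norm (s m) \<le> (SUP n. norm (s n))" by (rule cSUP_upper[OF UNIV_I bd, of m])
      then show ?thesis using Suc by simp
    qed
  qed simp
  ultimately show ?thesis using 1 unfolding lp_seq_def lp_norm_def by simp
next
  case 2
  have bd: "bdd_above (range (\<lambda>n. norm (s n)))" by (rule lp_seq_bdd[OF _ sp]) (use 2 in simp)
  then obtain M where M: "\<And>n. norm (s n) \<le> M" by (auto simp: bdd_above_def)
  have M0: "0 \<le> M" using M[of 0] norm_ge_zero[of "s 0"] by linarith
  have "bounded (range (\<lambda>n. case n of 0 \<Rightarrow> 0 | Suc m \<Rightarrow> s m))" unfolding bounded_iff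
  proof (intro exI[of _ M] ballI)
    fix x assume "x \<in> range (\<lambda>n. case n of 0 \<Rightarrow> 0 | Suc m \<Rightarrow> s m)"
    then obtain n where "x = (case n of 0 \<Rightarrow> 0 | Suc m \<Rightarrow> s m)" by auto
    then show "norm x \<le> M" using M M0 by (cases n) simp_all
  qed
  moreover have "(SUP n. norm (case n of 0 \<Rightarrow> 0 | Suc m \<Rightarrow> s m)) \<le> (SUP n. norm (s n))"
  proof (rule cSUP_least)
    fix n show "norm (case n of 0 \<Rightarrow> 0 | Suc m \<Rightarrow> s m) \<le> (SUP n. norm (s n))"
    proof (cases n)
      case 0
      have "norm (s 0) \<le> (SUP n. norm (s n))" by (rule cSUP_upper[OF UNIV_I bd, of 0])
      then have "0 \<le> (SUP n. norm (s n))" by (rule order_trans[OF norm_ge_zero])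
      then show ?thesis using 0 by simp
    next
      case (Suc m)
      have "norm (s m) \<le> (SUP n. norm (s n))" by (rule cSUP_upper[OF UNIV_I bd, of m])
      then show ?thesis using Suc by simp
    qed
  qed simp
  ultimately show ?thesis using 2 unfolding lp_seq_def lp_norm_def by simp
next
  case (3 q)
  have q0: "q > 0" using 3 by simp
  define t where "t = (\<lambda>n. case n of 0 \<Rightarrow> 0 | Suc m \<Rightarrow> s m)"
  have sm: "summable (\<lambda>n. norm (s n) powr q)" using sp 3 unfolding lp_seq_def by simp
  have ts: "(\<lambda>n. norm (t (Suc n)) powr q) = (\<lambda>n. norm (s n) powr q)" by (simp add: t_def)
  have sm2: "summable (\<lambda>n. norm (t n) powr q)"
    using sm unfolding ts[symmetric] by (subst (asm) summable_Suc_iff)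
  have e: "(\<Sum>n. norm (t (Suc n)) powr q) = (\<Sum>n. norm (t n) powr q) - norm (t 0) powr q"
    by (rule suminf_split_head[OF sm2])
  have t0: "norm (t 0) powr q = 0" by (simp add: t_def)
  have eq: "(\<Sum>n. norm (t n) powr q) = (\<Sum>n. norm (s n) powr q)" using e t0 unfolding ts by simp
  have "t \<in> lp_seq p" using sm2 3 unfolding lp_seq_def by simp
  moreover have "lp_norm p t = lp_norm p s" using eq 3 unfolding lp_norm_def by simp
  ultimately show ?thesis unfolding t_def by simp
qed

lemma lp_single:
  fixes x :: "'a::real_normed_vector"
  assumes vp: "valid_p p"
  shows "(\<lambda>n. if n = 0 then x else 0) \<in> lp_seq p \<and> lp_norm p (\<lambda>n. if n = 0 then x else 0) \<le> norm x"
proof -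
  define t where "t = (\<lambda>n::nat. if n = 0 then x else (0::'a))"
  have tS: "t (Suc n) = 0" for n unfolding t_def by simp
  have t0: "t 0 = x" unfolding t_def by simp
  have tle: "norm (t n) \<le> norm x" for n by (cases n) (simp_all add: tS t0)
  have sup: "(SUP n. norm (t n)) \<le> norm x"
  proof (rule cSUP_least)
    fix n show "norm (t n) \<le> norm x" by (rule tle)
  qed simp
  have bd: "bounded (range t)" unfolding bounded_iff
  proof (intro exI[of _ "norm x"] ballI)
    fix y assume "y \<in> range t" then obtain n where "y = t n" by auto
    then show "norm y \<le> norm x" using tle by simp
  qed
  have "(\<lambda>n. t (Suc n)) \<longlonglongrightarrow> 0" unfolding tS by (rule tendsto_const)
  hence lim: "t \<longlonglongrightarrow> 0" by (rule LIMSEQ_imp_Suc)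
  have "t \<in> lp_seq p \<and> lp_norm p t \<le> norm x"
    using vp
  proof (cases rule: valid_p_cases)
    case 1 then show ?thesis using lim sup unfolding lp_seq_def lp_norm_def by simp
  next
    case 2 then show ?thesis using bd sup unfolding lp_seq_def lp_norm_def by simp
  next
    case (3 q)
    have q0: "q > 0" using 3 by simp
    have ts: "(\<lambda>n. norm (t (Suc n)) powr q) = (\<lambda>n. 0)" unfolding tS by simp
    have "summable (\<lambda>n. norm (t (Suc n)) powr q)" unfolding ts by (rule summable_zero)
    hence sm2: "summable (\<lambda>n. norm (t n) powr q)" by (rule iffD1[OF summable_Suc_iff])
    have e: "(\<Sum>n. norm (t (Suc n)) powr q) = (\<Sum>n. norm (t n) powr q) - norm (t 0) powr q"
      by (rule suminf_split_head[OF sm2])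
    have eq: "(\<Sum>n. norm (t n) powr q) = norm x powr q" using e unfolding ts t0 by simp
    have "(norm x powr q) powr (1/q) = norm x" using q0 by (simp add: powr_powr)
    hence "lp_norm p t = norm x" using eq 3 unfolding lp_norm_def by simp
    moreover have "t \<in> lp_seq p" using sm2 3 unfolding lp_seq_def by simp
    ultimately show ?thesis by simp
  qed
  then show ?thesis unfolding t_def .
qed

lemma lp_coord:
  fixes s :: "nat \<Rightarrow> 'a::real_normed_vector"
  assumes vp: "valid_p p" and sp: "s \<in> lp_seq p"
  shows "norm (s 0) \<le> lp_norm p s"
  using vp
proof (cases rule: valid_p_cases)
  case 1
  have bd: "bdd_above (range (\<lambda>n. norm (s n)))" by (rule lp_seq_bdd[OF _ sp]) (use 1 in simp)
  show ?thesis using cSUP_upper[OF UNIV_I bd, of 0] 1 unfolding lp_norm_def by simp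
next
  case 2
  have bd: "bdd_above (range (\<lambda>n. norm (s n)))" by (rule lp_seq_bdd[OF _ sp]) (use 2 in simp)
  show ?thesis using cSUP_upper[OF UNIV_I bd, of 0] 2 unfolding lp_norm_def by simp
next
  case (3 q)
  have q0: "q > 0" using 3 by simp
  have sm: "summable (\<lambda>n. norm (s n) powr q)" using sp 3 unfolding lp_seq_def by simp
  have "sum (\<lambda>n. norm (s n) powr q) {0} \<le> (\<Sum>n. norm (s n) powr q)"
    by (rule sum_le_suminf[OF sm]) auto
  hence le: "norm (s 0) powr q \<le> (\<Sum>n. norm (s n) powr q)" by simp
  have "(norm (s 0) powr q) powr (1/q) \<le> (\<Sum>n. norm (s n) powr q) powr (1/q)"
    using q0 le by (intro powr_mono2) auto
  moreover have "(norm (s 0) powr q) powr (1/q) = norm (s 0)" using q0 by (simp add: powr_powr)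
  ultimately show ?thesis using 3 unfolding lp_norm_def by simp
qed



lemma ops_exist:
  fixes S :: "'a::banach \<Rightarrow> nat \<Rightarrow> 'a" and T :: "'a \<Rightarrow> 'a"
  assumes vp: "valid_p p" and iso: "lp_iso p S" and bT: "bounded_linear T"
  shows "\<exists>J K R Tinf. bounded_linear J \<and> bounded_linear K \<and> bounded_linear R \<and> bounded_linear Tinf
    \<and> bounded_linear (\<lambda>z. inv S (\<lambda>i. S z (Suc i)))
    \<and> (\<forall>x. K (J x) = x) \<and> (\<forall>x. inv S (\<lambda>i. S (R x) (Suc i)) = x) \<and> (\<forall>x. K (R x) = 0)
    \<and> (\<forall>x. inv S (\<lambda>i. S (J x) (Suc i)) = 0)
    \<and> (\<forall>x. J (K x) + R (inv S (\<lambda>i. S x (Suc i))) = x)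
    \<and> (\<forall>x. K (Tinf x) = T (K x))
    \<and> (\<forall>x. inv S (\<lambda>i. S (Tinf x) (Suc i)) = Tinf (inv S (\<lambda>i. S x (Suc i))))"
proof -
  have Sadd: "\<And>x y. S (x + y) = (\<lambda>n. S x n + S y n)"
    and Sscale: "\<And>c x. S (c *\<^sub>R x) = (\<lambda>n. c *\<^sub>R S x n)"
    and rng: "range S = lp_seq p"
    using iso unfolding lp_iso_def by auto
  obtain C where C: "\<And>x. lp_norm p (S x) \<le> C * norm x" using iso unfolding lp_iso_def by auto
  obtain c where c0: "c > 0" and c: "\<And>x. c * norm x \<le> lp_norm p (S x)"
    using iso unfolding lp_iso_def by auto
  have S0: "S 0 = (\<lambda>n. 0)" using Sscale[of 0 0] by simp
  have Sdiff: "S (x - y) = (\<lambda>n. S x n - S y n)" for x y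
    using Sadd[of x "- y"] Sscale[of "-1" y] by (simp add: fun_eq_iff)
  have injS: "inj S"
  proof (rule injI)
    fix x y assume "S x = S y"
    hence "S (x - y) = S 0" by (simp add: Sdiff S0)
    hence "c * norm (x - y) \<le> C * norm (0::'a)" using c[of "x - y"] C[of 0] by simp
    hence "c * norm (x - y) \<le> 0" by simp
    hence "norm (x - y) \<le> 0" using c0 by (simp add: mult_le_0_iff)
    thus "x = y" by simp
  qed
  have SinvS: "S (inv S s) = s" if "s \<in> lp_seq p" for s
    using that rng by (metis f_inv_into_f)
  have invSS: "inv S (S x) = x" for x using injS by simp
  have Sinv_bound: "norm (inv S s) \<le> lp_norm p s / c" if "s \<in> lp_seq p" for s
    using c[of "inv S s"] SinvS[OF that] c0 by (simp add: field_simps)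
  have inS: "S x \<in> lp_seq p" for x using rng by auto
  have gen: "bounded_linear (\<lambda>z. inv S (\<Phi> (S z)))"
    if add: "\<And>a b. \<Phi> (\<lambda>n. a n + b n) = (\<lambda>n. \<Phi> a n + \<Phi> b n)"
    and sc: "\<And>r a. \<Phi> (\<lambda>n. r *\<^sub>R a n) = (\<lambda>n. r *\<^sub>R \<Phi> a n)"
    and mp: "\<And>a. a \<in> lp_seq p \<Longrightarrow> \<Phi> a \<in> lp_seq p \<and> lp_norm p (\<Phi> a) \<le> B * lp_norm p a"
    and B: "B \<ge> 0" for \<Phi> B
  proof (rule bounded_linear_intro)
    fix x y
    have "S (inv S (\<Phi> (S x)) + inv S (\<Phi> (S y))) = \<Phi> (S (x + y))"
      unfolding Sadd add using SinvS mp inS by simp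
    then show "inv S (\<Phi> (S (x + y))) = inv S (\<Phi> (S x)) + inv S (\<Phi> (S y))"
      by (metis invSS)
  next
    fix r x
    have "S (r *\<^sub>R inv S (\<Phi> (S x))) = \<Phi> (S (r *\<^sub>R x))"
      unfolding Sscale sc using SinvS mp inS by simp
    then show "inv S (\<Phi> (S (r *\<^sub>R x))) = r *\<^sub>R inv S (\<Phi> (S x))"
      by (metis invSS)
  next
    fix x
    have "norm (inv S (\<Phi> (S x))) \<le> lp_norm p (\<Phi> (S x)) / c" using Sinv_bound mp inS by blast
    also have "\<dots> \<le> B * lp_norm p (S x) / c" using mp[OF inS] c0 by (simp add: divide_right_mono)
    also have "\<dots> \<le> B * (C * norm x) / c" using C[of x] B c0
      by (intro divide_right_mono mult_left_mono) auto
    finally show "norm (inv S (\<Phi> (S x))) \<le> norm x * (B * C / c)" by (simp add: field_simps)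
  qed
  define L where "L = (\<lambda>z. inv S (\<lambda>i. S z (Suc i)))"
  define R where "R = (\<lambda>z. inv S ((\<lambda>a n. case n of 0 \<Rightarrow> 0 | Suc m \<Rightarrow> a m) (S z)))"
  define Ti where "Ti = (\<lambda>z. inv S ((\<lambda>a n. T (a n)) (S z)))"
  define K where "K = (\<lambda>z. S z 0)"
  define J where "J = (\<lambda>x. inv S (\<lambda>n. if n = 0 then x else 0))"
  have bL: "bounded_linear L" unfolding L_def
  proof (rule gen[of "\<lambda>a n. a (Suc n)" 1])
    fix a :: "nat \<Rightarrow> 'a" assume "a \<in> lp_seq p"
    then show "(\<lambda>n. a (Suc n)) \<in> lp_seq p \<and> lp_norm p (\<lambda>n. a (Suc n)) \<le> 1 * lp_norm p a"
      using lp_shift[OF vp, of a] by simp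
  qed simp_all
  have bR: "bounded_linear R" unfolding R_def
  proof (rule gen[of _ 1])
    fix a b :: "nat \<Rightarrow> 'a"
    show "(\<lambda>n. case n of 0 \<Rightarrow> 0 | Suc m \<Rightarrow> a m + b m) =
          (\<lambda>n. (case n of 0 \<Rightarrow> 0 | Suc m \<Rightarrow> a m) + (case n of 0 \<Rightarrow> 0 | Suc m \<Rightarrow> b m))"
      by (rule ext) (simp split: nat.split)
  next
    fix r and a :: "nat \<Rightarrow> 'a"
    show "(\<lambda>n. case n of 0 \<Rightarrow> 0 | Suc m \<Rightarrow> r *\<^sub>R a m) =
          (\<lambda>n. r *\<^sub>R (case n of 0 \<Rightarrow> 0 | Suc m \<Rightarrow> a m))"
      by (rule ext) (simp split: nat.split)
  next
    fix a :: "nat \<Rightarrow> 'a" assume "a \<in> lp_seq p"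
    then show "(\<lambda>n. case n of 0 \<Rightarrow> 0 | Suc m \<Rightarrow> a m) \<in> lp_seq p \<and>
      lp_norm p (\<lambda>n. case n of 0 \<Rightarrow> 0 | Suc m \<Rightarrow> a m) \<le> 1 * lp_norm p a"
      using lp_cons0[OF vp, of a] by simp
  qed simp
  obtain KT where KT: "\<And>x. norm (T x) \<le> norm x * KT" and KT0: "KT > 0"
    using bounded_linear.pos_bounded[OF bT] by blast
  have bTi: "bounded_linear Ti" unfolding Ti_def
  proof (rule gen[of _ KT])
    fix a b :: "nat \<Rightarrow> 'a"
    show "(\<lambda>n. T (a n + b n)) = (\<lambda>n. T (a n) + T (b n))" by (simp add: bl_add[OF bT])
  next
    fix r and a :: "nat \<Rightarrow> 'a"
    show "(\<lambda>n. T (r *\<^sub>R a n)) = (\<lambda>n. r *\<^sub>R T (a n))" by (simp add: bl_scale[OF bT])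
  next
    fix a :: "nat \<Rightarrow> 'a" assume "a \<in> lp_seq p"
    then show "(\<lambda>n. T (a n)) \<in> lp_seq p \<and> lp_norm p (\<lambda>n. T (a n)) \<le> KT * lp_norm p a"
      using lp_dom[OF vp, of a KT "\<lambda>n. T (a n)"] KT KT0 by (simp add: mult.commute)
  qed (use KT0 in simp)
  have bK: "bounded_linear K" unfolding K_def
  proof (rule bounded_linear_intro[where K = "max C 0"])
    fix x y show "S (x + y) 0 = S x 0 + S y 0" by (simp add: Sadd)
  next
    fix r x show "S (r *\<^sub>R x) 0 = r *\<^sub>R S x 0" by (simp add: Sscale)
  next
    fix x
    have "norm (S x 0) \<le> lp_norm p (S x)" by (rule lp_coord[OF vp inS])
    also have "\<dots> \<le> C * norm x" by (rule C)
    also have "\<dots> \<le> max C 0 * norm x" by (intro mult_right_mono) auto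
    also have "\<dots> = norm x * max C 0" by simp
    finally show "norm (S x 0) \<le> norm x * max C 0" .
  qed
  have sing: "(\<lambda>n. if n = 0 then x else 0) \<in> lp_seq p" for x :: 'a using lp_single[OF vp] by blast
  have SJ: "S (J x) = (\<lambda>n. if n = 0 then x else 0)" for x unfolding J_def by (rule SinvS[OF sing])
  have bJ: "bounded_linear J"
  proof (rule bounded_linear_intro[where K = "1 / c"])
    fix x y
    have "S (J x + J y) = S (J (x + y))" unfolding Sadd SJ by (rule ext) simp
    then show "J (x + y) = J x + J y" by (metis invSS)
  next
    fix r x
    have "S (r *\<^sub>R J x) = S (J (r *\<^sub>R x))" unfolding Sscale SJ by (rule ext) simp
    then show "J (r *\<^sub>R x) = r *\<^sub>R J x" by (metis invSS)
  next
    fix x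
    have "norm (J x) \<le> lp_norm p (\<lambda>n. if n = 0 then x else 0) / c"
      unfolding J_def by (rule Sinv_bound[OF sing])
    also have "\<dots> \<le> norm x / c" using lp_single[OF vp, of x] c0 by (simp add: divide_right_mono)
    finally show "norm (J x) \<le> norm x * (1 / c)" by simp
  qed
  have SL: "S (L z) = (\<lambda>i. S z (Suc i))" for z
    unfolding L_def by (rule SinvS) (use lp_shift[OF vp inS[of z]] in simp)
  have SR: "S (R z) = (\<lambda>n. case n of 0 \<Rightarrow> 0 | Suc m \<Rightarrow> S z m)" for z
    unfolding R_def by (rule SinvS) (use lp_cons0[OF vp inS[of z]] in simp)
  have STi: "S (Ti z) = (\<lambda>n. T (S z n))" for z
    unfolding Ti_def by (rule SinvS) (use lp_dom[OF vp inS[of z], of KT "\<lambda>n. T (S z n)"] KT KT0 in \<open>simp add: mult.commute\<close>)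
  have KJ: "\<forall>x. K (J x) = x" unfolding K_def SJ by simp
  have LR: "\<forall>x. L (R x) = x" unfolding L_def SR by (simp add: invSS)
  have KR: "\<forall>x. K (R x) = 0" unfolding K_def SR by simp
  have LJ: "\<forall>x. L (J x) = 0" unfolding L_def SJ by (simp add: S0[symmetric] invSS)
  have JKRL: "\<forall>x. J (K x) + R (L x) = x"
  proof
    fix x
    have "S (J (K x) + R (L x)) = S x" unfolding Sadd SJ SR SL K_def
      by (rule ext) (simp split: nat.split)
    then show "J (K x) + R (L x) = x" by (metis invSS)
  qed
  have TK: "\<forall>x. K (Ti x) = T (K x)" unfolding K_def STi by simp
  have TL: "\<forall>x. L (Ti x) = Ti (L x)"
  proof
    fix x
    have "L (Ti x) = inv S (\<lambda>i. T (S x (Suc i)))" unfolding L_def STi by simp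
    moreover have "Ti (L x) = inv S (\<lambda>i. T (S x (Suc i)))" by (simp add: Ti_def SL)
    ultimately show "L (Ti x) = Ti (L x)" by simp
  qed
  show ?thesis
    apply (rule exI[of _ J], rule exI[of _ K], rule exI[of _ R], rule exI[of _ Ti])
    using bJ bK bR bTi bL KJ LR KR LJ JKRL TK TL unfolding L_def by blast
qed


theorem mainTheorem9:
  fixes p :: ereal
    and X :: "nat \<Rightarrow> 'a::banach set"
    and P \<psi> :: "nat \<Rightarrow> 'a \<Rightarrow> 'a"
    and T1 T2 T3 :: "'a \<Rightarrow> 'a"
  assumes "valid_p p"
    and "isomorphic_to_lp_sum p TYPE('a)"
    and "decomposition p X P \<psi>"
    and "bounded_linear T1" and "bounded_linear T2" and "bounded_linear T3"
  shows "is_commutator (op_matrix T1 (left_shift \<psi> P) T2 T3)"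
proof -
  define S where "S = decomp_S \<psi> P"
  have iso: "lp_iso p S" using assms(3) unfolding decomposition_def S_def by blast
  have bT: "bounded_linear (\<lambda>x. T1 x + T3 x)" by (intro bounded_linear_add assms(4,6))
  obtain J K R Ti where bJ: "bounded_linear J" and bK: "bounded_linear K" and bR: "bounded_linear R"
    and bTi: "bounded_linear Ti" and bL: "bounded_linear (\<lambda>z. inv S (\<lambda>i. S z (Suc i)))"
    and KJ: "\<forall>x. K (J x) = x" and LR: "\<forall>x. inv S (\<lambda>i. S (R x) (Suc i)) = x"
    and KR: "\<forall>x. K (R x) = 0" and LJ: "\<forall>x. inv S (\<lambda>i. S (J x) (Suc i)) = 0"
    and JKRL: "\<forall>x. J (K x) + R (inv S (\<lambda>i. S x (Suc i))) = x"
    and TK: "\<forall>x. K (Ti x) = T1 (K x) + T3 (K x)"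
    and TL: "\<forall>x. inv S (\<lambda>i. S (Ti x) (Suc i)) = Ti (inv S (\<lambda>i. S x (Suc i)))"
    using ops_exist[OF assms(1) iso bT] by (auto simp: fun_eq_iff)
  have Leq: "left_shift \<psi> P = (\<lambda>z. inv S (\<lambda>i. S z (Suc i)))"
    unfolding left_shift_def S_def by (rule ext) simp
  show ?thesis unfolding Leq
    by (rule alg_main[OF bJ bK bL bR bTi assms(4,5,6)]) (use KJ LR KR LJ JKRL TK TL in auto)
qed

end
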